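(* Let $Q$ be a non-degenerate non-convex (and not self-intersecting) quadrangle of perimeter $2$. Then its dual quadrangle $Q^\circ$ is also non-convex (and not self-intersecting).
   Context: Identify $\mathbb{R}^2$ with $\mathbb{C}$. A quadrangle $Q=ABCD$ is an ordered 4-tuple of points $A,B,C,D\in\mathbb{C}$: $A$ is the first vertex and the order $A\to B\to C\to D\to A$ is the direction of traversal. Its edge vectors are $z_1=B-A$, $z_2=C-B$, $z_3=D-C$, $z_4=A-D$, so $z_1+z_2+z_3+z_4=0$; its perimeter is $|z_1|+|z_2|+|z_3|+|z_4|$. $Q$ is non-degenerate if each pair of consecutive edge vectors $(z_1,z_2),(z_2,z_3),(z_3,z_4),(z_4,z_1)$ consists of nonzero, non-collinear vectors. A non-degenerate quadrangle is self-intersecting if one of the pairs of opposite edges (segments $AB$ and $CD$, or $BC$ and $DA$) intersect; it is convex if it is not self-intersecting and all its interior angles are less than $\pi$; it is non-convex if it is neither self-intersecting nor convex. Associated plane: for a non-degenerate $Q$ of perimeter $2$, choose $u_1,\dots,u_4\in\mathbb{C}$ with $u_k^2=z_k$, where $u_1$ is an arbitrary square root of $z_1$ and for $k=1,2,3$ the sign of $u_{k+1}$ is chosen so that $\operatorname{Im}(\overline{u_k}u_{k+1})$ has the same sign as $\operatorname{Im}(\overline{z_k}z_{k+1})$. Write $u_k=a_k+i b_k$ and $\bar a=(a_1,a_2,a_3,a_4)$, $\bar b=(b_1,b_2,b_3,b_4)$; these are orthonormal in $\mathbb{R}^4$. Let $\Pi=\operatorname{span}(\bar a,\bar b)$ and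 $\Pi^\perp$ its orthogonal complement. Dual quadrangle: choose an orthonormal basis $(\bar c,\bar d)$ of $\Pi^\perp$, put $w_k=(c_k+i d_k)^2$; then $\sum_k w_k=0$ and $\sum_k|w_k|=2$. The dual quadrangle $Q^\circ=KLMN$ is the quadrangle with $L-K=w_1$, $M-L=w_2$, $N-M=w_3$, $K-N=w_4$. It is determined up to rotation, reflection and translation. *)

theory Defs
  imports "HOL-Analysis.Analysis"
begin

definition qedge :: "complex \<Rightarrow> complex \<Rightarrow> complex \<Rightarrow> complex \<Rightarrow> nat \<Rightarrow> complex" where
  "qedge A B C D k =
     (if k = 1 then B - A else if k = 2 then C - B else if k = 3 then D - C else A - D)"

definition nxt :: "nat \<Rightarrow> nat" where
  "nxt k = (if k = 4 then 1 else Suc k)"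

definition perimeter :: "complex \<Rightarrow> complex \<Rightarrow> complex \<Rightarrow> complex \<Rightarrow> real" where
  "perimeter A B C D = (\<Sum>k=1..4. cmod (qedge A B C D k))"

definition noncollinear_pair :: "complex \<Rightarrow> complex \<Rightarrow> bool" where
  "noncollinear_pair v w \<longleftrightarrow> v \<noteq> 0 \<and> w \<noteq> 0 \<and> \<not> (\<exists>t::real. w = t *\<^sub>R v)"

definition nondegenerate :: "complex \<Rightarrow> complex \<Rightarrow> complex \<Rightarrow> complex \<Rightarrow> bool" where
  "nondegenerate A B C D \<longleftrightarrow>
     (\<forall>k\<in>{1..4}. noncollinear_pair (qedge A B C D k) (qedge A B C D (nxt k)))"

definition self_intersecting :: "complex \<Rightarrow> complex \<Rightarrow> complex \<Rightarrow> complex \<Rightarrow> bool" where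
  "self_intersecting A B C D \<longleftrightarrow> nondegenerate A B C D \<and>
     (closed_segment A B \<inter> closed_segment C D \<noteq> {} \<or>
      closed_segment B C \<inter> closed_segment D A \<noteq> {})"

text \<open>Signed (shoelace) area; positive iff the traversal is counterclockwise.\<close>
definition signed_area :: "complex \<Rightarrow> complex \<Rightarrow> complex \<Rightarrow> complex \<Rightarrow> real" where
  "signed_area A B C D = Im (cnj A * B + cnj B * C + cnj C * D + cnj D * A) / 2"

text \<open>Interior angle at the vertex between edge k and edge (k+1 mod 4):
  pi minus the signed turning angle, the sign taken with respect to the orientation.\<close>
definition interior_angle :: "complex \<Rightarrow> complex \<Rightarrow> complex \<Rightarrow> complex \<Rightarrow> nat \<Rightarrow> real" where
  "interior_angle A B C D k =
     pi - sgn (signed_area A B C D) * Arg (qedge A B C D (nxt k) / qedge A B C D k)"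

definition convex_quad :: "complex \<Rightarrow> complex \<Rightarrow> complex \<Rightarrow> complex \<Rightarrow> bool" where
  "convex_quad A B C D \<longleftrightarrow> nondegenerate A B C D \<and> \<not> self_intersecting A B C D \<and>
     (\<forall>k\<in>{1..4}. interior_angle A B C D k < pi)"

definition nonconvex_quad :: "complex \<Rightarrow> complex \<Rightarrow> complex \<Rightarrow> complex \<Rightarrow> bool" where
  "nonconvex_quad A B C D \<longleftrightarrow> nondegenerate A B C D \<and> \<not> self_intersecting A B C D \<and>
     \<not> convex_quad A B C D"

definition admissible_roots :: "complex \<Rightarrow> complex \<Rightarrow> complex \<Rightarrow> complex \<Rightarrow> (nat \<Rightarrow> complex) \<Rightarrow> bool" where
  "admissible_roots A B C D u \<longleftrightarrow>
     (\<forall>k\<in>{1..4}. (u k)\<^sup>2 = qedge A B C D k) \<and>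
     (\<forall>k\<in>{1..3}. sgn (Im (cnj (u k) * u (Suc k))) =
                  sgn (Im (cnj (qedge A B C D k) * qedge A B C D (Suc k))))"

definition vec_a :: "(nat \<Rightarrow> complex) \<Rightarrow> real^4" where
  "vec_a u = vector [Re (u 1), Re (u 2), Re (u 3), Re (u 4)]"

definition vec_b :: "(nat \<Rightarrow> complex) \<Rightarrow> real^4" where
  "vec_b u = vector [Im (u 1), Im (u 2), Im (u 3), Im (u 4)]"

definition orthonormal_basis_perp :: "real^4 \<Rightarrow> real^4 \<Rightarrow> real^4 \<Rightarrow> real^4 \<Rightarrow> bool" where
  "orthonormal_basis_perp a b c d \<longleftrightarrow>
     norm c = 1 \<and> norm d = 1 \<and> orthogonal c d \<and>
     span {c, d} = {x. orthogonal x a \<and> orthogonal x b}"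

definition dual_edge :: "real^4 \<Rightarrow> real^4 \<Rightarrow> 4 \<Rightarrow> complex" where
  "dual_edge c d k = (Complex (c $ k) (d $ k))\<^sup>2"

end

theory Submission
  imports Defs
begin


lemma rows_orth:
  fixes f :: "4 \<Rightarrow> 4 \<Rightarrow> real"
  assumes "\<And>j k. (\<Sum>i\<in>UNIV. f i j * f i k) = (if j = k then 1 else 0)"
  shows "(\<Sum>j\<in>UNIV. f i j * f l j) = (if i = l then 1 else 0)"
proof -
  define M :: "real^4^4" where "M = (\<chi> i j. f i j)"
  have "transpose M ** M = mat 1"
    using assms by (simp add: M_def matrix_matrix_mult_def transpose_def mat_def vec_eq_iff)
  hence "M ** transpose M = mat 1" using matrix_left_right_inverse by blast
  hence "(M ** transpose M) $ i $ l = mat 1 $ i $ l" by simp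
  thus ?thesis by (simp add: M_def matrix_matrix_mult_def transpose_def mat_def)
qed




definition P2 :: "(4 \<Rightarrow> real) \<Rightarrow> (4 \<Rightarrow> real) \<Rightarrow> 4 \<Rightarrow> 4 \<Rightarrow> real" where
  "P2 x y i j = x i * y j - x j * y i"

definition DD :: "(4 \<Rightarrow> real) \<Rightarrow> (4 \<Rightarrow> real) \<Rightarrow> (4 \<Rightarrow> real) \<Rightarrow> (4 \<Rightarrow> real) \<Rightarrow> real" where
  "DD a b x y = P2 a b 1 2 * P2 x y 3 4 - P2 a b 1 3 * P2 x y 2 4 + P2 a b 1 4 * P2 x y 2 3
     + P2 a b 2 3 * P2 x y 1 4 - P2 a b 2 4 * P2 x y 1 3 + P2 a b 3 4 * P2 x y 1 2"

lemma DD_lin: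
  "DD a b (\<lambda>k. al * a k + be * b k + ga * c k + de * d k) (\<lambda>k. al' * a k + be' * b k + ga' * c k + de' * d k)
   = (ga * de' - de * ga') * DD a b c d"
  unfolding DD_def P2_def by algebra




lemma pl_gen:
  assumes rows: "\<And>i l. a i * a l + b i * b l + c i * c l + d i * d l = (if i = l then 1 else 0)"
  shows "DD a b c d * (c i * d j - d i * c j) = DD a b (\<lambda>k. if k = i then 1 else 0) (\<lambda>k. if k = j then 1 else 0)"
proof -
  have e: "(\<lambda>k. if k = i then 1 else 0) = (\<lambda>k. a i * a k + b i * b k + c i * c k + d i * d k)" for i
    using rows by (auto simp: fun_eq_iff)
  show ?thesis unfolding e DD_lin by simp
qed

lemma pl:
  assumes rows: "\<And>i l. a i * a l + b i * b l + c i * c l + d i * d l = (if i = l then 1 else 0)"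
  shows "DD a b c d * (c 1 * d 2 - d 1 * c 2) = P2 a b 3 4"
    "DD a b c d * (c 2 * d 3 - d 2 * c 3) = P2 a b 1 4"
    "DD a b c d * (c 3 * d 4 - d 3 * c 4) = P2 a b 1 2"
    "DD a b c d * (c 4 * d 1 - d 4 * c 1) = - P2 a b 2 3"
  by (subst pl_gen[OF rows], simp add: DD_def P2_def)+




lemma quad_lemma:
  fixes X2 Y2 X3 Y3 X4 Y4 :: real
  assumes "X2 > 0" "Y2 > 0" "X4 > 0" "Y4 > 0"
    "X2*X3 + Y2*Y3 > 0" "X2*Y3 - Y2*X3 > 0" "X3*X4 + Y3*Y4 > 0" "X3*Y4 - Y3*X4 > 0"
  shows "X3 > 0 \<and> Y3 > 0"
proof -
  define k where "k = X2*Y4 - Y2*X4"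
  have idx: "k * X3 = (X3*Y4 - Y3*X4) * X2 + (X2*Y3 - Y2*X3) * X4" unfolding k_def by algebra
  have idy: "k * Y3 = (X3*Y4 - Y3*X4) * Y2 + (X2*Y3 - Y2*X3) * Y4" unfolding k_def by algebra
  have dot: "k * (X3*X3 + Y3*Y3) = (X3*Y4 - Y3*X4) * (X2*X3 + Y2*Y3) + (X2*Y3 - Y2*X3) * (X3*X4 + Y3*Y4)"
    unfolding k_def by algebra
  have "(X3*Y4 - Y3*X4) * (X2*X3 + Y2*Y3) + (X2*Y3 - Y2*X3) * (X3*X4 + Y3*Y4) > 0"
    using assms by (simp add: add_pos_pos)
  hence "k * (X3*X3 + Y3*Y3) > 0" using dot by simp
  moreover have "X3*X3 + Y3*Y3 \<ge> 0" by simp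
  ultimately have kp: "k > 0" by (metis mult_nonpos_nonneg not_less)
  have "k * X3 > 0" using idx assms by (simp add: add_pos_pos)
  hence "X3 > 0" using kp by (simp add: zero_less_mult_iff)
  moreover have "k * Y3 > 0" using idy assms by (simp add: add_pos_pos)
  hence "Y3 > 0" using kp by (simp add: zero_less_mult_iff)
  ultimately show ?thesis by simp
qed

lemma core_base:
  fixes u1 u2 u3 u4 :: complex
  assumes "Re(cnj u1*u2)>0" "Re(cnj u2*u3)>0" "Re(cnj u3*u4)>0" "Re(cnj u4*u1)>0"
    "Im(cnj u1*u2)>0" "Im(cnj u2*u3)>0" "Im(cnj u3*u4)>0" "Im(cnj u4*u1)<0"
  shows "u1^2+u2^2+u3^2+u4^2 \<noteq> 0"
proof
  assume S: "u1^2+u2^2+u3^2+u4^2 = 0"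
  define q2 where "q2 = cnj u1 * u2"
  define q3 where "q3 = cnj u1 * u3"
  define q4 where "q4 = cnj u1 * u4"
  define n where "n = Re u1 * Re u1 + Im u1 * Im u1"
  have "u1 \<noteq> 0" using assms(1) by auto
  have "n = (cmod u1)^2" unfolding n_def cmod_power2 by (simp add: power2_eq_square)
  hence np: "n > 0" using \<open>u1 \<noteq> 0\<close> by simp
  have h1: "Re q2 > 0" "Im q2 > 0" using assms unfolding q2_def by auto
  have h2: "Re q4 > 0" "Im q4 > 0" using assms unfolding q4_def by (auto simp: mult.commute)
  have e23: "Re q2 * Re q3 + Im q2 * Im q3 = n * Re (cnj u2 * u3)"
    "Re q2 * Im q3 - Im q2 * Re q3 = n * Im (cnj u2 * u3)"
    unfolding q2_def q3_def n_def by (simp_all add: algebra_simps)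
  have e34: "Re q3 * Re q4 + Im q3 * Im q4 = n * Re (cnj u3 * u4)"
    "Re q3 * Im q4 - Im q3 * Re q4 = n * Im (cnj u3 * u4)"
    unfolding q4_def q3_def n_def by (simp_all add: algebra_simps)
  have "Re q3 > 0 \<and> Im q3 > 0"
    apply (rule quad_lemma[OF h1 h2])
    using e23 e34 np assms by simp_all
  have "Im ((cnj u1)^2 * (u1^2+u2^2+u3^2+u4^2)) = 2 * (Re q2 * Im q2 + Re q3 * Im q3 + Re q4 * Im q4)"
    unfolding q2_def q3_def q4_def by (simp add: power2_eq_square algebra_simps)
  also have "\<dots> > 0" using h1 h2 \<open>Re q3 > 0 \<and> Im q3 > 0\<close> by (simp add: add_pos_pos)
  finally show False using S by simp
qed

lemma core_base':
  fixes u1 u2 u3 u4 :: complex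
  assumes "Re(cnj u1*u2)>0" "Re(cnj u2*u3)>0" "Re(cnj u3*u4)>0" "Re(cnj u4*u1)>0"
    "Im(cnj u1*u2)<0" "Im(cnj u2*u3)<0" "Im(cnj u3*u4)<0" "Im(cnj u4*u1)>0"
  shows "u1^2+u2^2+u3^2+u4^2 \<noteq> 0"
proof -
  have R: "Re (cnj (cnj a) * cnj b) = Re (cnj a * b)" and I: "Im (cnj (cnj a) * cnj b) = - Im (cnj a * b)" for a b :: complex
    by simp_all
  have "(cnj u1)^2+(cnj u2)^2+(cnj u3)^2+(cnj u4)^2 \<noteq> 0"
    by (rule core_base) (use assms in \<open>simp_all only: R I neg_less_0_iff_less neg_0_less_iff_less\<close>)
  moreover have "(cnj u1)^2+(cnj u2)^2+(cnj u3)^2+(cnj u4)^2 = cnj (u1^2+u2^2+u3^2+u4^2)" by simp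
  ultimately show ?thesis by (metis complex_cnj_zero)
qed

lemma sign4:
  fixes x1 x2 x3 x4 :: real
  assumes "x1*x2*x3*x4 < 0"
  shows "(x1>0 \<and> x2>0 \<and> x3>0 \<and> x4<0) \<or> (x2>0 \<and> x3>0 \<and> x4>0 \<and> x1<0) \<or>
    (x3>0 \<and> x4>0 \<and> x1>0 \<and> x2<0) \<or> (x4>0 \<and> x1>0 \<and> x2>0 \<and> x3<0) \<or>
    (x1<0 \<and> x2<0 \<and> x3<0 \<and> x4>0) \<or> (x2<0 \<and> x3<0 \<and> x4<0 \<and> x1>0) \<or>
    (x3<0 \<and> x4<0 \<and> x1<0 \<and> x2>0) \<or> (x4<0 \<and> x1<0 \<and> x2<0 \<and> x3>0)"
proof -
  have sg: "sgn x1 * sgn x2 * sgn x3 * sgn x4 = -1"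
    using assms by (simp add: sgn_mult[symmetric])
  have "x1 \<noteq> 0" "x2 \<noteq> 0" "x3 \<noteq> 0" "x4 \<noteq> 0" using sg by auto
  hence "(x1 > 0 \<or> x1 < 0) \<and> (x2 > 0 \<or> x2 < 0) \<and> (x3 > 0 \<or> x3 < 0) \<and> (x4 > 0 \<or> x4 < 0)" by auto
  thus ?thesis using sg by (elim conjE disjE) (simp_all add: sgn_if)
qed

lemma core:
  fixes u1 u2 u3 u4 :: complex
  assumes r: "Re(cnj u1*u2)>0" "Re(cnj u2*u3)>0" "Re(cnj u3*u4)>0" "Re(cnj u4*u1)>0"
    and p: "Im(cnj u1*u2) * Im(cnj u2*u3) * Im(cnj u3*u4) * Im(cnj u4*u1) < 0"
  shows "u1^2+u2^2+u3^2+u4^2 \<noteq> 0"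
proof -
  have B1: "\<And>u1 u2 u3 u4. Re(cnj u1*u2)>0 \<Longrightarrow> Re(cnj u2*u3)>0 \<Longrightarrow> Re(cnj u3*u4)>0 \<Longrightarrow> Re(cnj u4*u1)>0 \<Longrightarrow>
    Im(cnj u1*u2)>0 \<Longrightarrow> Im(cnj u2*u3)>0 \<Longrightarrow> Im(cnj u3*u4)>0 \<Longrightarrow> Im(cnj u4*u1)<0 \<Longrightarrow> u1^2+u2^2+u3^2+u4^2 \<noteq> (0::complex)"
    by (rule core_base)
  have B2: "\<And>u1 u2 u3 u4. Re(cnj u1*u2)>0 \<Longrightarrow> Re(cnj u2*u3)>0 \<Longrightarrow> Re(cnj u3*u4)>0 \<Longrightarrow> Re(cnj u4*u1)>0 \<Longrightarrow>
    Im(cnj u1*u2)<0 \<Longrightarrow> Im(cnj u2*u3)<0 \<Longrightarrow> Im(cnj u3*u4)<0 \<Longrightarrow> Im(cnj u4*u1)>0 \<Longrightarrow> u1^2+u2^2+u3^2+u4^2 \<noteq> (0::complex)"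
    by (rule core_base')
  define x1 where "x1 = Im(cnj u1*u2)"
  define x2 where "x2 = Im(cnj u2*u3)"
  define x3 where "x3 = Im(cnj u3*u4)"
  define x4 where "x4 = Im(cnj u4*u1)"
  have px: "x1*x2*x3*x4 < 0" using p unfolding x1_def x2_def x3_def x4_def .
  have cases: "(x1>0 \<and> x2>0 \<and> x3>0 \<and> x4<0) \<or> (x2>0 \<and> x3>0 \<and> x4>0 \<and> x1<0) \<or>
    (x3>0 \<and> x4>0 \<and> x1>0 \<and> x2<0) \<or> (x4>0 \<and> x1>0 \<and> x2>0 \<and> x3<0) \<or>
    (x1<0 \<and> x2<0 \<and> x3<0 \<and> x4>0) \<or> (x2<0 \<and> x3<0 \<and> x4<0 \<and> x1>0) \<or>
    (x3<0 \<and> x4<0 \<and> x1<0 \<and> x2>0) \<or> (x4<0 \<and> x1<0 \<and> x2<0 \<and> x3>0)"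
    using sign4[OF px] by blast
  have s: "u1^2+u2^2+u3^2+u4^2 = u2^2+u3^2+u4^2+u1^2" "u1^2+u2^2+u3^2+u4^2 = u3^2+u4^2+u1^2+u2^2"
     "u1^2+u2^2+u3^2+u4^2 = u4^2+u1^2+u2^2+u3^2" by (simp_all add: algebra_simps)
  show ?thesis
    using cases unfolding x1_def x2_def x3_def x4_def
    apply (elim disjE conjE)
    subgoal using r by (intro B1) simp_all
    subgoal using r by (subst s(1), intro B1) simp_all
    subgoal using r by (subst s(2), intro B1) simp_all
    subgoal using r by (subst s(3), intro B1) simp_all
    subgoal using r by (intro B2) simp_all
    subgoal using r by (subst s(1), intro B2) simp_all
    subgoal using r by (subst s(2), intro B2) simp_all
    subgoal using r by (subst s(3), intro B2) simp_all
    done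
qed




lemma conv0:
  fixes g h t :: real
  assumes "(1-t)*g + t*h = 0" "0 \<le> t" "t \<le> 1" "g \<noteq> 0" "h \<noteq> 0"
  shows "g*h < 0"
proof (rule ccontr)
  assume "\<not> g*h < 0"
  hence "g*h > 0" using assms by (simp add: not_less order.order_iff_strict)
  hence "(g > 0 \<and> h > 0) \<or> (g < 0 \<and> h < 0)" by (simp add: zero_less_mult_iff)
  thus False
  proof
    assume "g > 0 \<and> h > 0"
    hence "(1-t)*g \<ge> 0" "t*h \<ge> 0" using assms by simp_all
    hence "(1-t)*g = 0" "t*h = 0" using assms(1) by linarith+
    thus False using \<open>g > 0 \<and> h > 0\<close> by simp
  next
    assume "g < 0 \<and> h < 0"
    hence "(1-t)*g \<le> 0" "t*h \<le> 0" using assms by (simp_all add: mult_nonneg_nonpos)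
    hence "(1-t)*g = 0" "t*h = 0" using assms(1) by linarith+
    thus False using \<open>g < 0 \<and> h < 0\<close> by simp
  qed
qed

definition ori :: "complex \<Rightarrow> complex \<Rightarrow> complex \<Rightarrow> real" where
  "ori P Q X = Im (cnj (Q - P) * (X - P))"

lemma ori_affine: "ori R S ((1 - t) *\<^sub>R P + t *\<^sub>R Q) = (1-t) * ori R S P + t * ori R S Q"
  by (simp add: ori_def scaleR_conv_of_real algebra_simps)

lemma ori_on: "ori R S ((1 - t) *\<^sub>R R + t *\<^sub>R S) = 0"
  by (simp add: ori_def scaleR_conv_of_real algebra_simps)

lemma seg_inter_imp:
  assumes "x \<in> closed_segment P Q" "x \<in> closed_segment R S"
    "ori R S P \<noteq> 0" "ori R S Q \<noteq> 0"
  shows "ori R S P * ori R S Q < 0"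
proof -
  obtain t where t: "0 \<le> t" "t \<le> 1" "x = (1 - t) *\<^sub>R P + t *\<^sub>R Q" using assms(1) in_segment(1) by blast
  obtain v where v: "x = (1 - v) *\<^sub>R R + v *\<^sub>R S" using assms(2) in_segment(1) by blast
  have "ori R S x = 0" using v ori_on by simp
  hence "(1-t) * ori R S P + t * ori R S Q = 0" using t ori_affine by simp
  thus ?thesis using conv0 t assms by blast
qed

lemma seg_id:
  fixes P Q R S :: complex
  shows "(- ori R S Q) *\<^sub>R P + ori R S P *\<^sub>R Q = ori P Q S *\<^sub>R R - ori P Q R *\<^sub>R S"
  "ori R S P - ori R S Q = - (ori P Q R - ori P Q S)"
  by (simp_all add: ori_def complex_eq_iff algebra_simps)

lemma frac01:
  fixes g h :: real
  assumes "g * h < 0"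
  shows "0 \<le> g / (g - h)" "g / (g - h) \<le> 1"
proof -
  have "(g > 0 \<and> h < 0) \<or> (g < 0 \<and> h > 0)" using assms by (auto simp: mult_less_0_iff)
  thus "0 \<le> g / (g - h)" "g / (g - h) \<le> 1"
    by (auto simp: divide_simps)
qed

lemma seg_inter_if:
  assumes "ori P Q R * ori P Q S < 0" "ori R S P * ori R S Q < 0"
  shows "closed_segment P Q \<inter> closed_segment R S \<noteq> {}"
proof -
  define al where "al = ori P Q R"
  define be where "be = ori P Q S"
  define ga where "ga = ori R S P"
  define de where "de = ori R S Q"
  define t where "t = ga / (ga - de)"
  define v where "v = al / (al - be)"
  have gd: "ga - de \<noteq> 0" using assms(2) unfolding ga_def de_def by auto
  have ab: "al - be = - (ga - de)" using seg_id(2) unfolding al_def be_def ga_def de_def by simp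
  have x: "(1 - t) *\<^sub>R P + t *\<^sub>R Q \<in> closed_segment P Q"
    using frac01[OF assms(2)] unfolding t_def ga_def de_def in_segment by blast
  have y: "(1 - v) *\<^sub>R R + v *\<^sub>R S \<in> closed_segment R S"
    using frac01[OF assms(1)] unfolding v_def al_def be_def in_segment by blast
  have t1: "1 - t = (- de) / (ga - de)" using gd unfolding t_def by (simp add: field_simps)
  have v1: "1 - v = (- be) / (al - be)" using gd ab unfolding v_def by (simp add: field_simps)
  have "(1 - t) *\<^sub>R P + t *\<^sub>R Q = (1/(ga-de)) *\<^sub>R ((- de) *\<^sub>R P + ga *\<^sub>R Q)"
    unfolding t1 unfolding t_def by (simp add: scaleR_diff_right)
  also have "(- de) *\<^sub>R P + ga *\<^sub>R Q = be *\<^sub>R R - al *\<^sub>R S" using seg_id(1) unfolding al_def be_def ga_def de_def by simp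
  also have "(1/(ga-de)) *\<^sub>R (be *\<^sub>R R - al *\<^sub>R S) = (1 - v) *\<^sub>R R + v *\<^sub>R S"
  proof -
    have m: "x / (de - ga) = - (x / (ga - de))" for x
      by (metis divide_minus_right minus_diff_eq)
    show ?thesis unfolding v1 unfolding v_def ab by (simp add: scaleR_diff_right m)
  qed
  finally have eq: "(1 - t) *\<^sub>R P + t *\<^sub>R Q = (1 - v) *\<^sub>R R + v *\<^sub>R S" .
  show ?thesis using x y unfolding eq by (metis IntI empty_iff)
qed

lemma seg_iff:
  assumes "ori R S P \<noteq> 0" "ori R S Q \<noteq> 0" "ori P Q R \<noteq> 0" "ori P Q S \<noteq> 0"
  shows "closed_segment P Q \<inter> closed_segment R S \<noteq> {} \<longleftrightarrow>
    ori P Q R * ori P Q S < 0 \<and> ori R S P * ori R S Q < 0"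
proof
  assume "closed_segment P Q \<inter> closed_segment R S \<noteq> {}"
  then obtain x where "x \<in> closed_segment P Q" "x \<in> closed_segment R S" by blast
  thus "ori P Q R * ori P Q S < 0 \<and> ori R S P * ori R S Q < 0"
    using seg_inter_imp[of x P Q R S] seg_inter_imp[of x R S P Q] assms by simp
next
  assume "ori P Q R * ori P Q S < 0 \<and> ori R S P * ori R S Q < 0"
  thus "closed_segment P Q \<inter> closed_segment R S \<noteq> {}" using seg_inter_if by simp
qed




definition sq :: "complex \<Rightarrow> complex \<Rightarrow> complex \<Rightarrow> complex \<Rightarrow> nat \<Rightarrow> real" where
  "sq A B C D k = Im (cnj (qedge A B C D k) * qedge A B C D (nxt k))"

lemma qedge_simps [simp]:
  "qedge A B C D 1 = B - A" "qedge A B C D 2 = C - B" "qedge A B C D 3 = D - C" "qedge A B C D 4 = A - D"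
  by (simp_all add: qedge_def)

lemma qedge_Suc0 [simp]: "qedge A B C D (Suc 0) = B - A" by (simp add: qedge_def)

lemma nxt_simps [simp]: "nxt (Suc 0) = 2" "nxt 1 = 2" "nxt 2 = 3" "nxt 3 = 4" "nxt 4 = 1"
  by (simp_all add: nxt_def)

lemma ball14: "(\<forall>k\<in>{1..4::nat}. P k) \<longleftrightarrow> P 1 \<and> P 2 \<and> P 3 \<and> P 4"
proof -
  have "{1..4::nat} = {1,2,3,4}" by auto
  thus ?thesis by simp
qed

lemma ball13: "(\<forall>k\<in>{1..3::nat}. P k) \<longleftrightarrow> P 1 \<and> P 2 \<and> P 3"
proof -
  have "{1..3::nat} = {1,2,3}" by auto
  thus ?thesis by simp
qed

lemma noncol_iff: "noncollinear_pair v w \<longleftrightarrow> Im (cnj v * w) \<noteq> 0"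
proof
  assume h: "noncollinear_pair v w"
  show "Im (cnj v * w) \<noteq> 0"
  proof
    assume im: "Im (cnj v * w) = 0"
    have v0: "v \<noteq> 0" using h by (simp add: noncollinear_pair_def)
    define n where "n = Re v * Re v + Im v * Im v"
    have "n = (cmod v)^2" unfolding n_def cmod_power2 by (simp add: power2_eq_square)
    hence n0: "n \<noteq> 0" using v0 by simp
    define t where "t = (Re v * Re w + Im v * Im w) / n"
    have "w = t *\<^sub>R v"
    proof (rule complex_eqI)
      have e: "Re v * Im w - Im v * Re w = 0" using im by (simp add: algebra_simps)
      have x: "(Re v * Re w + Im v * Im w) * Re v = n * Re w" unfolding n_def using e by algebra
      have y: "(Re v * Re w + Im v * Im w) * Im v = n * Im w" unfolding n_def using e by algebra
      show "Re w = Re (t *\<^sub>R v)" using x n0 unfolding t_def by (simp add: field_simps)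
      show "Im w = Im (t *\<^sub>R v)" using y n0 unfolding t_def by (simp add: field_simps)
    qed
    thus False using h by (auto simp: noncollinear_pair_def)
  qed
next
  assume h: "Im (cnj v * w) \<noteq> 0"
  have "v \<noteq> 0" "w \<noteq> 0" using h by auto
  moreover have "\<not> (\<exists>t::real. w = t *\<^sub>R v)"
  proof
    assume "\<exists>t::real. w = t *\<^sub>R v"
    then obtain t where "w = t *\<^sub>R v" by blast
    hence "Im (cnj v * w) = 0" by (simp add: algebra_simps)
    thus False using h by simp
  qed
  ultimately show "noncollinear_pair v w" by (simp add: noncollinear_pair_def)
qed

lemma nondeg_iff: "nondegenerate A B C D \<longleftrightarrow>
  sq A B C D 1 \<noteq> 0 \<and> sq A B C D 2 \<noteq> 0 \<and> sq A B C D 3 \<noteq> 0 \<and> sq A B C D 4 \<noteq> 0"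
  unfolding nondegenerate_def ball14 noncol_iff sq_def by simp

lemma ori_sq:
  "ori A B C = sq A B C D 1" "ori A B D = sq A B C D 4" "ori C D A = sq A B C D 3" "ori C D B = sq A B C D 2"
  "ori B C D = sq A B C D 2" "ori B C A = sq A B C D 1" "ori D A B = sq A B C D 4" "ori D A C = sq A B C D 3"
  by (simp_all add: ori_def sq_def qedge_def nxt_def algebra_simps)

lemma si_iff:
  assumes "nondegenerate A B C D"
  shows "self_intersecting A B C D \<longleftrightarrow>
    (sq A B C D 1 * sq A B C D 4 < 0 \<and> sq A B C D 3 * sq A B C D 2 < 0) \<or>
    (sq A B C D 2 * sq A B C D 1 < 0 \<and> sq A B C D 4 * sq A B C D 3 < 0)"
proof -
  have nz: "sq A B C D 1 \<noteq> 0" "sq A B C D 2 \<noteq> 0" "sq A B C D 3 \<noteq> 0" "sq A B C D 4 \<noteq> 0"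
    using assms nondeg_iff by auto
  have 1: "closed_segment A B \<inter> closed_segment C D \<noteq> {} \<longleftrightarrow>
      sq A B C D 1 * sq A B C D 4 < 0 \<and> sq A B C D 3 * sq A B C D 2 < 0"
    using seg_iff[of C D A B, unfolded ori_sq[where A=A and B=B and C=C and D=D]] nz by simp
  have 2: "closed_segment B C \<inter> closed_segment D A \<noteq> {} \<longleftrightarrow>
      sq A B C D 2 * sq A B C D 1 < 0 \<and> sq A B C D 4 * sq A B C D 3 < 0"
    using seg_iff[of D A B C, unfolded ori_sq[where A=A and B=B and C=C and D=D]] nz by simp
  show ?thesis unfolding self_intersecting_def using assms 1 2 by simp
qed

lemma area_sq:
  "signed_area A B C D = (sq A B C D 1 + sq A B C D 3) / 2"
  "sq A B C D 1 + sq A B C D 3 = sq A B C D 2 + sq A B C D 4"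
  by (simp_all add: signed_area_def sq_def qedge_def nxt_def algebra_simps)

lemma angle_iff:
  assumes "k \<in> {1..4}" "sq A B C D k \<noteq> 0"
  shows "interior_angle A B C D k < pi \<longleftrightarrow> signed_area A B C D * sq A B C D k > 0"
proof -
  define z where "z = qedge A B C D k"
  define w where "w = qedge A B C D (nxt k)"
  have s: "sq A B C D k = Im (cnj z * w)" unfolding sq_def z_def w_def ..
  have z0: "z \<noteq> 0" using assms(2) s by auto
  have "Im (w / z) = Im (cnj z * w) / ((Re z)\<^sup>2 + (Im z)\<^sup>2)"
    unfolding Im_divide by (simp add: algebra_simps)
  moreover have "(Re z)\<^sup>2 + (Im z)\<^sup>2 > 0" using z0
    by (metis cmod_power2 zero_less_norm_iff zero_less_power)
  ultimately have sg: "(Im (w / z) > 0 \<longleftrightarrow> sq A B C D k > 0) \<and> (Im (w / z) < 0 \<longleftrightarrow> sq A B C D k < 0)"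
    unfolding s by (simp add: divide_less_0_iff zero_less_divide_iff)
  have ang: "interior_angle A B C D k < pi \<longleftrightarrow> sgn (signed_area A B C D) * Arg (w / z) > 0"
    unfolding interior_angle_def z_def w_def by simp
  have "Arg (w/z) > 0 \<longleftrightarrow> sq A B C D k > 0" using sg assms(2) Arg_pos_iff by auto
  moreover have "Arg (w/z) < 0 \<longleftrightarrow> sq A B C D k < 0" using sg Arg_neg_iff by auto
  ultimately show ?thesis unfolding ang
    by (cases "signed_area A B C D" rule: linorder_cases)
       (auto simp: zero_less_mult_iff mult_less_0_iff)
qed

lemma sign_logic:
  fixes s1 s2 s3 s4 :: real
  assumes nz: "s1 \<noteq> 0" "s2 \<noteq> 0" "s3 \<noteq> 0" "s4 \<noteq> 0" and e: "s1 + s3 = s2 + s4"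
  shows "(\<not> ((s1 * s4 < 0 \<and> s3 * s2 < 0) \<or> (s2 * s1 < 0 \<and> s4 * s3 < 0)) \<and>
          \<not> ((s1+s3)/2 * s1 > 0 \<and> (s1+s3)/2 * s2 > 0 \<and> (s1+s3)/2 * s3 > 0 \<and> (s1+s3)/2 * s4 > 0))
       \<longleftrightarrow> s1 * s2 * s3 * s4 < 0"
proof -
  have "(s1 > 0 \<or> s1 < 0) \<and> (s2 > 0 \<or> s2 < 0) \<and> (s3 > 0 \<or> s3 < 0) \<and> (s4 > 0 \<or> s4 < 0)"
    using nz by auto
  thus ?thesis
  proof (elim conjE disjE)
  qed (insert e, simp_all add: mult_less_0_iff zero_less_mult_iff mult_pos_neg mult_neg_neg; linarith?)+
qed

lemma nonconvex_iff:
  "nonconvex_quad A B C D \<longleftrightarrow>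
    sq A B C D 1 \<noteq> 0 \<and> sq A B C D 2 \<noteq> 0 \<and> sq A B C D 3 \<noteq> 0 \<and> sq A B C D 4 \<noteq> 0 \<and>
    sq A B C D 1 * sq A B C D 2 * sq A B C D 3 * sq A B C D 4 < 0"
proof (cases "nondegenerate A B C D")
  case False
  thus ?thesis unfolding nonconvex_quad_def nondeg_iff by blast
next
  case True
  hence nz: "sq A B C D 1 \<noteq> 0" "sq A B C D 2 \<noteq> 0" "sq A B C D 3 \<noteq> 0" "sq A B C D 4 \<noteq> 0"
    using nondeg_iff by auto
  have ang: "(\<forall>k\<in>{1..4}. interior_angle A B C D k < pi) \<longleftrightarrow>
     ((sq A B C D 1 + sq A B C D 3)/2 * sq A B C D 1 > 0 \<and> (sq A B C D 1 + sq A B C D 3)/2 * sq A B C D 2 > 0 \<and>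
      (sq A B C D 1 + sq A B C D 3)/2 * sq A B C D 3 > 0 \<and> (sq A B C D 1 + sq A B C D 3)/2 * sq A B C D 4 > 0)"
    unfolding ball14 using angle_iff[of _ A B C D] nz area_sq(1)[of A B C D] by simp
  have "nonconvex_quad A B C D \<longleftrightarrow> \<not> self_intersecting A B C D \<and> \<not> (\<forall>k\<in>{1..4}. interior_angle A B C D k < pi)"
    unfolding nonconvex_quad_def convex_quad_def using True by blast
  also have "\<dots> \<longleftrightarrow> sq A B C D 1 * sq A B C D 2 * sq A B C D 3 * sq A B C D 4 < 0"
    unfolding si_iff[OF True] ang using sign_logic[OF nz area_sq(2)] by simp
  finally show ?thesis using nz by simp
qed



lemma vector_4 [simp]:
 "(vector [x1,x2,x3,x4] ::('a::zero)^4)$1 = x1"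
 "(vector [x1,x2,x3,x4] ::('a::zero)^4)$2 = x2"
 "(vector [x1,x2,x3,x4] ::('a::zero)^4)$3 = x3"
 "(vector [x1,x2,x3,x4] ::('a::zero)^4)$4 = x4"
  unfolding vector_def by simp_all

lemma sq_cross: "Im (cnj (u^2) * v^2) = 2 * Re (cnj u * v) * Im (cnj u * v)"
  by (simp add: power2_eq_square algebra_simps)

lemma pos_from_sgn:
  fixes s R P :: real
  assumes "s = 2*R*P" "s \<noteq> 0" "sgn P = sgn s"
  shows "R > 0"
proof -
  have "P \<noteq> 0" using assms by auto
  hence "P > 0 \<or> P < 0" by auto
  thus ?thesis
  proof
    assume "P > 0" hence "s > 0" using assms(3) by (metis sgn_greater sgn_pos)
    thus ?thesis using assms(1) \<open>P > 0\<close> by (simp add: zero_less_mult_iff)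
  next
    assume "P < 0" hence "s < 0" using assms(3) by (metis sgn_less sgn_neg)
    thus ?thesis using assms(1) \<open>P < 0\<close> by (simp add: mult_less_0_iff)
  qed
qed

lemma prod_sign1: "(16::real) * X * Y < 0 \<Longrightarrow> X > 0 \<Longrightarrow> Y < 0"
  by (simp add: mult_less_0_iff zero_less_mult_iff)

lemma prod_sign2: "(16::real) * X * Y < 0 \<Longrightarrow> X < 0 \<Longrightarrow> Y > 0"
  by (simp add: mult_less_0_iff zero_less_mult_iff)

lemma sum14: "sum f {1..4::nat} = f 1 + f 2 + f 3 + f 4"
proof -
  have "{1..4::nat} = {1,2,3,4}" by auto
  thus ?thesis by (simp add: add.assoc)
qed

lemma inner4: "(x::real^4) \<bullet> y = x$1*y$1 + x$2*y$2 + x$3*y$3 + x$4*y$4"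
  by (simp add: inner_vec_def sum_4)

lemma cmod_sq: "cmod (z^2) = Re z * Re z + Im z * Im z"
  unfolding norm_power cmod_power2 by (simp add: power2_eq_square)

lemma cross_Complex: "Im (cnj ((Complex x y)^2) * (Complex x' y')^2) = 2 * (x*x' + y*y') * (x*y' - y*x')"
  by (simp add: power2_eq_square algebra_simps)

theorem theorem5p1:
  fixes A B C D K L M N :: complex and u :: "nat \<Rightarrow> complex" and c d :: "real^4"
  assumes "nonconvex_quad A B C D"
    and "perimeter A B C D = 2"
    and "admissible_roots A B C D u"
    and "orthonormal_basis_perp (vec_a u) (vec_b u) c d"
    and "L - K = dual_edge c d 1" and "M - L = dual_edge c d 2"
    and "N - M = dual_edge c d 3" and "K - N = dual_edge c d 4"
  shows "nonconvex_quad K L M N"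
proof -
  have nz: "sq A B C D 1 \<noteq> 0" "sq A B C D 2 \<noteq> 0" "sq A B C D 3 \<noteq> 0" "sq A B C D 4 \<noteq> 0"
    and ps: "sq A B C D 1 * sq A B C D 2 * sq A B C D 3 * sq A B C D 4 < 0"
    using assms(1) unfolding nonconvex_iff by auto
  have adm1: "\<forall>k\<in>{1..4}. (u k)\<^sup>2 = qedge A B C D k"
    and adm2: "\<forall>k\<in>{1..3}. sgn (Im (cnj (u k) * u (Suc k))) =
                  sgn (Im (cnj (qedge A B C D k) * qedge A B C D (Suc k)))"
    using assms(3) unfolding admissible_roots_def by auto
  have usq: "(u 1)^2 = B - A" "(u 2)^2 = C - B" "(u 3)^2 = D - C" "(u 4)^2 = A - D"
    using adm1 unfolding ball14 by simp_all
  have sgn3: "sgn (Im (cnj (u 1) * u 2)) = sgn (sq A B C D 1)"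
       "sgn (Im (cnj (u 2) * u 3)) = sgn (sq A B C D 2)"
       "sgn (Im (cnj (u 3) * u 4)) = sgn (sq A B C D 3)"
  proof -
    have S: "Suc 1 = 2" "Suc 2 = 3" "Suc 3 = (4::nat)" by simp_all
    have "sgn (Im (cnj (u k) * u (Suc k))) = sgn (sq A B C D k)" if "k \<in> {1,2,3}" for k
    proof -
      have "k \<in> {1..3}" "nxt k = Suc k" using that by (auto simp: nxt_def)
      thus ?thesis using adm2 unfolding sq_def by simp
    qed
    from this[of 1] this[of 2] this[of 3] show
       "sgn (Im (cnj (u 1) * u 2)) = sgn (sq A B C D 1)"
       "sgn (Im (cnj (u 2) * u 3)) = sgn (sq A B C D 2)"
       "sgn (Im (cnj (u 3) * u 4)) = sgn (sq A B C D 3)" unfolding S by simp_all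
  qed
  define R1 where "R1 = Re (cnj (u 1) * u 2)"
  define R2 where "R2 = Re (cnj (u 2) * u 3)"
  define R3 where "R3 = Re (cnj (u 3) * u 4)"
  define R4 where "R4 = Re (cnj (u 4) * u 1)"
  define P1 where "P1 = Im (cnj (u 1) * u 2)"
  define P2' where "P2' = Im (cnj (u 2) * u 3)"
  define P3 where "P3 = Im (cnj (u 3) * u 4)"
  define P4 where "P4 = Im (cnj (u 4) * u 1)"
  have sRP: "sq A B C D 1 = 2 * R1 * P1" "sq A B C D 2 = 2 * R2 * P2'"
      "sq A B C D 3 = 2 * R3 * P3" "sq A B C D 4 = 2 * R4 * P4"
    unfolding R1_def R2_def R3_def R4_def P1_def P2'_def P3_def P4_def sq_cross[symmetric]
    unfolding sq_def nxt_simps qedge_simps usq[symmetric] by (rule refl)+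
  have R123: "R1 > 0" "R2 > 0" "R3 > 0"
    using pos_from_sgn[OF sRP(1) nz(1)] pos_from_sgn[OF sRP(2) nz(2)] pos_from_sgn[OF sRP(3) nz(3)]
      sgn3 unfolding P1_def P2'_def P3_def by auto
  have sum0: "(u 1)^2 + (u 2)^2 + (u 3)^2 + (u 4)^2 = 0" unfolding usq by simp
  have R4: "R4 < 0"
  proof (rule ccontr)
    assume "\<not> R4 < 0"
    moreover have "R4 \<noteq> 0" using nz(4) sRP(4) by auto
    ultimately have R4p: "R4 > 0" by simp
    have "16 * (R1 * R2 * R3 * R4) * (P1 * P2' * P3 * P4) < 0" using ps unfolding sRP by (simp add: algebra_simps)
    moreover have "R1 * R2 * R3 * R4 > 0" using R123 R4p by simp
    ultimately have "P1 * P2' * P3 * P4 < 0" by (rule prod_sign1)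
    hence "(u 1)^2 + (u 2)^2 + (u 3)^2 + (u 4)^2 \<noteq> 0"
      using core R123 R4p unfolding R1_def R2_def R3_def R4_def P1_def P2'_def P3_def P4_def by blast
    thus False using sum0 by simp
  qed
  have PP: "P1 * P2' * P3 * P4 > 0"
  proof -
    have "16 * (R1 * R2 * R3 * R4) * (P1 * P2' * P3 * P4) < 0" using ps unfolding sRP by (simp add: algebra_simps)
    moreover have "R1 * R2 * R3 * R4 < 0" using R123 R4 by (simp add: mult_less_0_iff)
    ultimately show ?thesis by (rule prod_sign2)
  qed
  define fa :: "4 \<Rightarrow> real" where "fa = (\<lambda>i. vec_a u $ i)"
  define fb :: "4 \<Rightarrow> real" where "fb = (\<lambda>i. vec_b u $ i)"
  define fc :: "4 \<Rightarrow> real" where "fc = (\<lambda>i. c $ i)"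
  define fd :: "4 \<Rightarrow> real" where "fd = (\<lambda>i. d $ i)"
  have fab: "fa 1 = Re (u 1)" "fa 2 = Re (u 2)" "fa 3 = Re (u 3)" "fa 4 = Re (u 4)"
    "fb 1 = Im (u 1)" "fb 2 = Im (u 2)" "fb 3 = Im (u 3)" "fb 4 = Im (u 4)"
    by (simp_all add: fa_def fb_def vec_a_def vec_b_def)
  have normc: "norm c = 1" and normd: "norm d = 1" and ocd: "orthogonal c d"
    and spn: "span {c, d} = {x. orthogonal x (vec_a u) \<and> orthogonal x (vec_b u)}"
    using assms(4) unfolding orthonormal_basis_perp_def by auto
  have "c \<in> span {c, d}" "d \<in> span {c, d}" by (simp_all add: span_base)
  hence oc: "vec_a u \<bullet> c = 0" "vec_b u \<bullet> c = 0" and od: "vec_a u \<bullet> d = 0" "vec_b u \<bullet> d = 0"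
    using spn by (auto simp: orthogonal_def inner_commute)
  have cc: "c \<bullet> c = 1" "d \<bullet> d = 1" using normc normd by (simp_all add: power2_norm_eq_inner[symmetric])
  have cd: "c \<bullet> d = 0" using ocd by (simp add: orthogonal_def)
  have perim: "(Re (u 1) * Re (u 1) + Im (u 1) * Im (u 1)) + (Re (u 2) * Re (u 2) + Im (u 2) * Im (u 2))
      + (Re (u 3) * Re (u 3) + Im (u 3) * Im (u 3)) + (Re (u 4) * Re (u 4) + Im (u 4) * Im (u 4)) = 2"
  proof -
    have "perimeter A B C D = cmod ((u 1)^2) + cmod ((u 2)^2) + cmod ((u 3)^2) + cmod ((u 4)^2)"
      unfolding perimeter_def sum14 usq by simp
    thus ?thesis using assms(2) unfolding cmod_sq by simp
  qed
  have re0: "Re ((u 1)^2 + (u 2)^2 + (u 3)^2 + (u 4)^2) = 0" and im0: "Im ((u 1)^2 + (u 2)^2 + (u 3)^2 + (u 4)^2) = 0"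
    using sum0 by simp_all
  have aa: "fa 1 * fa 1 + fa 2 * fa 2 + fa 3 * fa 3 + fa 4 * fa 4 = 1"
    and bb: "fb 1 * fb 1 + fb 2 * fb 2 + fb 3 * fb 3 + fb 4 * fb 4 = 1"
    and ab: "fa 1 * fb 1 + fa 2 * fb 2 + fa 3 * fb 3 + fa 4 * fb 4 = 0"
    using perim re0 im0 unfolding fab by (simp_all add: power2_eq_square algebra_simps)
  have ac: "fa 1 * fc 1 + fa 2 * fc 2 + fa 3 * fc 3 + fa 4 * fc 4 = 0"
    and bc: "fb 1 * fc 1 + fb 2 * fc 2 + fb 3 * fc 3 + fb 4 * fc 4 = 0"
    and ad: "fa 1 * fd 1 + fa 2 * fd 2 + fa 3 * fd 3 + fa 4 * fd 4 = 0"
    and bd: "fb 1 * fd 1 + fb 2 * fd 2 + fb 3 * fd 3 + fb 4 * fd 4 = 0"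
    and cc': "fc 1 * fc 1 + fc 2 * fc 2 + fc 3 * fc 3 + fc 4 * fc 4 = 1"
    and dd': "fd 1 * fd 1 + fd 2 * fd 2 + fd 3 * fd 3 + fd 4 * fd 4 = 1"
    and cd': "fc 1 * fd 1 + fc 2 * fd 2 + fc 3 * fd 3 + fc 4 * fd 4 = 0"
    using oc od cc cd unfolding fa_def fb_def fc_def fd_def inner4 by simp_all
  define f :: "4 \<Rightarrow> 4 \<Rightarrow> real" where
    "f i j = (if j = 1 then fa i else if j = 2 then fb i else if j = 3 then fc i else fd i)" for i j
  have G: "(\<Sum>i\<in>UNIV. f i j * f i k) = (\<Sum>i\<in>UNIV. f i k * f i j)" for j k by (simp add: mult.commute)
  have F: "(\<Sum>i\<in>UNIV. f i 1 * f i 1) = 1" "(\<Sum>i\<in>UNIV. f i 1 * f i 2) = 0"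
    "(\<Sum>i\<in>UNIV. f i 1 * f i 3) = 0" "(\<Sum>i\<in>UNIV. f i 1 * f i 4) = 0"
    "(\<Sum>i\<in>UNIV. f i 2 * f i 2) = 1" "(\<Sum>i\<in>UNIV. f i 2 * f i 3) = 0"
    "(\<Sum>i\<in>UNIV. f i 2 * f i 4) = 0" "(\<Sum>i\<in>UNIV. f i 3 * f i 3) = 1"
    "(\<Sum>i\<in>UNIV. f i 3 * f i 4) = 0" "(\<Sum>i\<in>UNIV. f i 4 * f i 4) = 1"
    unfolding sum_4 f_def using aa bb ab ac bc ad bd cc' dd' cd' by simp_all
  have hyp: "(\<Sum>i\<in>UNIV. f i j * f i k) = (if j = k then 1 else 0)" for j k
  proof -
    have "\<forall>j k. (\<Sum>i\<in>UNIV. f i j * f i k) = (if j = k then 1 else 0)"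
      unfolding forall_4 using F G by (simp del: sum_4)
    thus ?thesis by blast
  qed
  have rows: "fa i * fa l + fb i * fb l + fc i * fc l + fd i * fd l = (if i = l then 1 else 0)" for i l
    using rows_orth[of f i l, OF hyp] unfolding sum_4 f_def by simp
  note PL = pl[of fa fb fc fd, OF rows]
  define eps where "eps = DD fa fb fc fd"
  define Q1 where "Q1 = fc 1 * fd 2 - fd 1 * fc 2"
  define Q2 where "Q2 = fc 2 * fd 3 - fd 2 * fc 3"
  define Q3 where "Q3 = fc 3 * fd 4 - fd 3 * fc 4"
  define Q4 where "Q4 = fc 4 * fd 1 - fd 4 * fc 1"
  have EQ: "eps * Q1 = P3" "eps * Q2 = - P4" "eps * Q3 = P1" "eps * Q4 = - P2'"
    using PL unfolding eps_def Q1_def Q2_def Q3_def Q4_def P1_def P2'_def P3_def P4_def P2_def fab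
    by (simp_all add: algebra_simps)
  have "eps^4 * (Q1 * Q2 * Q3 * Q4) = (eps * Q1) * (eps * Q2) * (eps * Q3) * (eps * Q4)"
    by (simp add: power4_eq_xxxx algebra_simps)
  also have "\<dots> = P1 * P2' * P3 * P4" unfolding EQ by (simp add: algebra_simps)
  finally have "eps^4 * (Q1 * Q2 * Q3 * Q4) > 0" using PP by simp
  moreover have "eps^4 \<ge> 0" by (simp add: zero_le_even_power)
  ultimately have QQ: "Q1 * Q2 * Q3 * Q4 > 0" by (simp add: zero_less_mult_iff)
  have R': "fc 1 * fc 2 + fd 1 * fd 2 = - R1" "fc 2 * fc 3 + fd 2 * fd 3 = - R2"
    "fc 3 * fc 4 + fd 3 * fd 4 = - R3" "fc 4 * fc 1 + fd 4 * fd 1 = - R4"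
    using rows[of 1 2] rows[of 2 3] rows[of 3 4] rows[of 4 1]
    unfolding R1_def R2_def R3_def R4_def fab by (simp_all add: algebra_simps)
  have dq: "qedge K L M N 1 = (Complex (fc 1) (fd 1))^2" "qedge K L M N 2 = (Complex (fc 2) (fd 2))^2"
    "qedge K L M N 3 = (Complex (fc 3) (fd 3))^2" "qedge K L M N 4 = (Complex (fc 4) (fd 4))^2"
    using assms(5-8) by (simp_all add: dual_edge_def fc_def fd_def)
  have T: "sq K L M N 1 = 2 * (- R1) * Q1" "sq K L M N 2 = 2 * (- R2) * Q2"
    "sq K L M N 3 = 2 * (- R3) * Q3" "sq K L M N 4 = 2 * (- R4) * Q4"
    unfolding sq_def nxt_simps dq cross_Complex R'[symmetric] Q1_def Q2_def Q3_def Q4_def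
    by (simp_all add: algebra_simps)
  have RR: "R1 * R2 * R3 * R4 < 0" using R123 R4 by (simp add: mult_less_0_iff)
  have "sq K L M N 1 * sq K L M N 2 * sq K L M N 3 * sq K L M N 4 = 16 * (R1 * R2 * R3 * R4) * (Q1 * Q2 * Q3 * Q4)"
    unfolding T by (simp add: algebra_simps)
  also have "\<dots> < 0" using RR QQ by (simp add: mult_less_0_iff)
  finally have tp: "sq K L M N 1 * sq K L M N 2 * sq K L M N 3 * sq K L M N 4 < 0" .
  hence "sq K L M N 1 \<noteq> 0 \<and> sq K L M N 2 \<noteq> 0 \<and> sq K L M N 3 \<noteq> 0 \<and> sq K L M N 4 \<noteq> 0" by auto
  thus ?thesis unfolding nonconvex_iff using tp by simp
qed

end
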